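(* Suppose $\lambda^*/n\to0$ as $n\to\infty$. If $\lambda_j\to\infty$ and $\sqrt{n}\,\lambda_j/\lambda^*\to\infty$ as $n\to\infty$ for all $j=1,\dots,p$, then for every $\beta\in\mathbb{R}^p$, $$P_\beta\big(\hat\beta_{AL,j}\neq0\iff j\in\mathcal{A}\ \text{ for all } j\big)\to1\quad\text{as } n\to\infty.$$
   Context: For each $n\ge p$: linear regression model $y=X\beta+\varepsilon$ with $y\in\mathbb{R}^n$, non-stochastic $X\in\mathbb{R}^{n\times p}$ ($p$ fixed) of full column rank, unknown $\beta\in\mathbb{R}^p$, and $\varepsilon$ with i.i.d. components of mean zero and finite variance $\sigma^2>0$; $P_\beta$ is the probability when the true parameter is $\beta$. $X'X/n\to C$ positive definite as $n\to\infty$. $\hat\beta_{LS}=(X'X)^{-1}X'y$; the events $\{\hat\beta_{LS,j}=0\}$ have probability zero and are excluded. Non-negative tuning parameters $\lambda_j=\lambda_{n,j}$, $\lambda^*=\max_j\lambda_j$. Adaptive Lasso: $\hat\beta_{AL}=\arg\min_{b\in\mathbb{R}^p}\big(\|y-Xb\|^2+2\sum_{j=1}^p\lambda_j|b_j|/|\hat\beta_{LS,j}|\big)$. The active set is $\mathcal{A}=\{j:\beta_j\neq0\}$. *)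

theory Defs
  imports "HOL-Probability.Probability"
begin

text \<open>Design: for each sample size n, the rows x_1,...,x_n in R^p are given by
  a function x :: nat => real^'p (row i for i < n). The index type 'p (finite)
  encodes the fixed dimension p = CARD('p).\<close>

definition gram :: "(nat \<Rightarrow> real^'p::finite) \<Rightarrow> nat \<Rightarrow> real^'p^'p" where
  "gram x n = (\<chi> k l. \<Sum>i<n. x i $ k * x i $ l)"

definition full_col_rank :: "(nat \<Rightarrow> real^'p::finite) \<Rightarrow> nat \<Rightarrow> bool" where
  "full_col_rank x n \<longleftrightarrow> (\<forall>b. (\<forall>i<n. x i \<bullet> b = 0) \<longrightarrow> b = 0)"

definition pos_def :: "real^'p^'p \<Rightarrow> bool" where
  "pos_def C \<longleftrightarrow> transpose C = C \<and> (\<forall>v. v \<noteq> 0 \<longrightarrow> v \<bullet> (C *v v) > 0)"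

definition resp :: "(nat \<Rightarrow> real^'p::finite) \<Rightarrow> real^'p \<Rightarrow> (nat \<Rightarrow> real) \<Rightarrow> nat \<Rightarrow> real" where
  "resp x \<beta> e = (\<lambda>i. x i \<bullet> \<beta> + e i)"

definition lsq :: "(nat \<Rightarrow> real^'p::finite) \<Rightarrow> nat \<Rightarrow> (nat \<Rightarrow> real) \<Rightarrow> real^'p" where
  "lsq x n y = matrix_inv (gram x n) *v (\<Sum>i<n. y i *\<^sub>R x i)"

definition al_obj :: "(nat \<Rightarrow> real^'p::finite) \<Rightarrow> nat \<Rightarrow> ('p \<Rightarrow> real) \<Rightarrow> (nat \<Rightarrow> real) \<Rightarrow> real^'p \<Rightarrow> real" where
  "al_obj x n lam y b = (\<Sum>i<n. (y i - x i \<bullet> b)^2)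
      + 2 * (\<Sum>j\<in>UNIV. lam j * \<bar>b $ j\<bar> / \<bar>lsq x n y $ j\<bar>)"

definition adaptive_lasso :: "(nat \<Rightarrow> real^'p::finite) \<Rightarrow> nat \<Rightarrow> ('p \<Rightarrow> real) \<Rightarrow> (nat \<Rightarrow> real) \<Rightarrow> real^'p" where
  "adaptive_lasso x n lam y = (SOME b. \<forall>b'. al_obj x n lam y b \<le> al_obj x n lam y b')"

definition lam_star :: "('p::finite \<Rightarrow> real) \<Rightarrow> real" where
  "lam_star lam = Max (range lam)"

end

theory Submission
  imports Defs
begin


definition qB :: "(nat \<Rightarrow> real^'p::finite) \<Rightarrow> nat \<Rightarrow> real^'p \<Rightarrow> real^'p \<Rightarrow> real" where
  "qB x n u v = (\<Sum>i<n. (x i \<bullet> u) * (x i \<bullet> v))"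

lemma gram_mult: "gram x n *v v = (\<Sum>i<n. (x i \<bullet> v) *\<^sub>R x i)"
proof -
  have "(gram x n *v v) $ k = (\<Sum>i<n. (x i \<bullet> v) *\<^sub>R x i) $ k" for k
  proof -
    have "(gram x n *v v) $ k = (\<Sum>l\<in>UNIV. \<Sum>i<n. x i $ k * x i $ l * v $ l)"
      by (simp add: gram_def matrix_vector_mult_def sum_distrib_right)
    also have "\<dots> = (\<Sum>i<n. \<Sum>l\<in>UNIV. x i $ k * x i $ l * v $ l)" by (rule sum.swap)
    also have "\<dots> = (\<Sum>i<n. (x i \<bullet> v) *\<^sub>R x i) $ k"
      by (simp add: inner_vec_def sum_distrib_left sum_distrib_right mult_ac)
    finally show ?thesis .
  qed
  then show ?thesis by (simp add: vec_eq_iff)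
qed

lemma inner_gram: "u \<bullet> (gram x n *v v) = qB x n u v"
  by (simp add: gram_mult qB_def inner_sum_right mult_ac inner_commute)

lemma qB_sym: "qB x n u v = qB x n v u" by (simp add: qB_def mult_ac)
lemma qB_add1: "qB x n (u + w) v = qB x n u v + qB x n w v"
  by (simp add: qB_def inner_add_right algebra_simps sum.distrib)
lemma qB_add2: "qB x n v (u + w) = qB x n v u + qB x n v w"
  by (simp add: qB_def inner_add_right algebra_simps sum.distrib)
lemma qB_diff1: "qB x n (u - w) v = qB x n u v - qB x n w v"
  by (simp add: qB_def inner_diff_right algebra_simps sum_subtractf)
lemma qB_diff2: "qB x n v (u - w) = qB x n v u - qB x n v w"
  by (simp add: qB_def inner_diff_right algebra_simps sum_subtractf)
lemma qB_scale1: "qB x n (a *\<^sub>R u) v = a * qB x n u v"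
  by (simp add: qB_def sum_distrib_left mult_ac)
lemma qB_scale2: "qB x n v (a *\<^sub>R u) = a * qB x n v u"
  by (simp add: qB_def sum_distrib_left mult_ac)
lemma qB_nonneg: "qB x n u u \<ge> 0"
  by (simp add: qB_def sum_nonneg)

lemma resp_sq: "(\<Sum>i<n. (resp x \<beta> e i - x i \<bullet> b)^2) =
   qB x n (b - \<beta>) (b - \<beta>) - 2 * ((b - \<beta>) \<bullet> (\<Sum>i<n. e i *\<^sub>R x i)) + (\<Sum>i<n. (e i)^2)"
  by (simp add: resp_def qB_def inner_sum_right inner_diff_right power2_eq_square algebra_simps
      sum.distrib sum_subtractf sum_distrib_left inner_commute)

lemma resp_sum: "(\<Sum>i<n. resp x \<beta> e i *\<^sub>R x i) = gram x n *v \<beta> + (\<Sum>i<n. e i *\<^sub>R x i)"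
  by (simp add: resp_def gram_mult scaleR_add_left sum.distrib)



lemma invertible_matrix_inv: "invertible A \<Longrightarrow> A ** matrix_inv A = mat 1 \<and> matrix_inv A ** A = mat 1"
  unfolding invertible_def matrix_inv_def by (rule someI_ex)

lemma mask_norm: "norm (\<chi> j. if P j then v $ j else 0) \<le> norm (v :: real^'p::finite)"
  by (rule norm_le_componentwise_cart) auto

lemma al_obj_expand:
  "al_obj x n lam (resp x \<beta> e) b =
    qB x n (b - \<beta>) (b - \<beta>) - 2 * ((b - \<beta>) \<bullet> (\<Sum>i<n. e i *\<^sub>R x i)) + (\<Sum>i<n. (e i)^2)
    + 2 * (\<Sum>j\<in>UNIV. (lam j / \<bar>lsq x n (resp x \<beta> e) $ j\<bar>) * \<bar>b $ j\<bar>)"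
  unfolding al_obj_def resp_sq by (simp add: mult_ac)

lemma al_obj_alt: "al_obj x n lam y = (\<lambda>b. (\<Sum>i<n. (y i - x i \<bullet> b)^2)
      + 2 * (\<Sum>j\<in>UNIV. (lam j / \<bar>lsq x n y $ j\<bar>) * \<bar>b $ j\<bar>))"
  by (auto simp: al_obj_def fun_eq_iff)

lemma al_obj_cont: "continuous_on UNIV (al_obj x n lam y)"
  unfolding al_obj_alt by (intro continuous_intros)

locale det =
  fixes x :: "nat \<Rightarrow> real^'p::finite" and n :: nat and lam :: "'p \<Rightarrow> real"
    and \<beta> :: "real^'p" and e :: "nat \<Rightarrow> real" and c K :: real
  assumes cpos: "c > 0" and npos: "n > 0" and Knn: "K \<ge> 0"
    and Gpos: "\<And>v. c * n * (norm v)^2 \<le> qB x n v v"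
    and Gbd: "\<And>v. norm (gram x n *v v) \<le> K * n * norm v"
    and lam_nn: "\<And>j. lam j \<ge> 0"

context det
begin

definition "zz = (\<Sum>i<n. e i *\<^sub>R x i)"
definition "ww j = lam j / \<bar>lsq x n (resp x \<beta> e) $ j\<bar>"
definition "obj b = al_obj x n lam (resp x \<beta> e) b"

lemma ww_nn: "ww j \<ge> 0" using lam_nn[of j] by (simp add: ww_def)

lemma obj_eq: "obj b = qB x n (b - \<beta>) (b - \<beta>) - 2 * ((b - \<beta>) \<bullet> zz) + (\<Sum>i<n. (e i)^2)
    + 2 * (\<Sum>j\<in>UNIV. ww j * \<bar>b $ j\<bar>)"
  unfolding obj_def al_obj_expand zz_def ww_def by simp

lemma qB_le: "qB x n u v \<le> K * n * norm u * norm v"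
proof -
  have "qB x n u v = u \<bullet> (gram x n *v v)" by (simp add: inner_gram)
  also have "\<dots> \<le> norm u * norm (gram x n *v v)" by (rule Cauchy_Schwarz_ineq2[THEN order_trans[OF abs_ge_self]])
  also have "\<dots> \<le> norm u * (K * n * norm v)" by (rule mult_left_mono[OF Gbd]) simp
  finally show ?thesis by (simp add: mult_ac)
qed

lemma qB_ge: "- (K * n * norm u * norm v) \<le> qB x n u v"
proof -
  have "qB x n u v = u \<bullet> (gram x n *v v)" by (simp add: inner_gram)
  moreover have "- (norm u * norm (gram x n *v v)) \<le> u \<bullet> (gram x n *v v)"
    using Cauchy_Schwarz_ineq2[of u "gram x n *v v"] by linarith
  moreover have "norm u * norm (gram x n *v v) \<le> norm u * (K * n * norm v)" by (rule mult_left_mono[OF Gbd]) simp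
  ultimately show ?thesis by (simp add: mult_ac)
qed

lemma gram_inj: "gram x n *v v = 0 \<Longrightarrow> v = 0"
proof -
  assume "gram x n *v v = 0"
  then have "qB x n v v = 0" by (metis inner_gram inner_zero_right)
  with Gpos[of v] cpos npos have "(norm v)^2 \<le> 0"
    by (smt (verit, best) of_nat_0_less_iff mult_pos_pos zero_le_power2 mult_le_0_iff)
  then show "v = 0" by simp
qed

lemma gram_invertible: "invertible (gram x n)"
  using gram_inj matrix_left_invertible_ker invertible_left_inverse by blast

lemma lsq_delta: "gram x n *v (lsq x n (resp x \<beta> e) - \<beta>) = zz"
proof -
  have "lsq x n (resp x \<beta> e) = matrix_inv (gram x n) *v (gram x n *v \<beta> + zz)"
    by (simp add: lsq_def resp_sum zz_def)
  then have "gram x n *v lsq x n (resp x \<beta> e) = gram x n *v \<beta> + zz"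
    using invertible_matrix_inv[OF gram_invertible]
    by (simp add: matrix_vector_mul_assoc)
  then show ?thesis by (simp add: matrix_vector_mult_diff_distrib)
qed

lemma delta_bound: "c * n * norm (lsq x n (resp x \<beta> e) - \<beta>) \<le> norm zz"
proof -
  define d where "d = lsq x n (resp x \<beta> e) - \<beta>"
  have "c * n * (norm d)^2 \<le> qB x n d d" by (rule Gpos)
  also have "\<dots> = d \<bullet> zz" using lsq_delta by (simp add: inner_gram[symmetric] d_def)
  also have "\<dots> \<le> norm d * norm zz" by (rule Cauchy_Schwarz_ineq2[THEN order_trans[OF abs_ge_self]])
  finally have *: "c * n * (norm d)^2 \<le> norm d * norm zz" .
  show ?thesis
  proof (cases "d = 0")
    case True then show ?thesis by (simp add: d_def)
  next
    case False
    then have "norm d > 0" by simp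
    with * show ?thesis unfolding d_def[symmetric]
      by (simp add: power2_eq_square)
  qed
qed

end


context det begin

definition "WA = (\<Sum>j\<in>UNIV. if \<beta> $ j \<noteq> 0 then ww j else 0)"

lemma WA_nn: "WA \<ge> 0" unfolding WA_def by (intro sum_nonneg) (simp add: ww_nn)

lemma qB_zero: "qB x n 0 0 = 0" by (simp add: qB_def)

lemma rate:
  assumes min: "\<forall>b'. obj b \<le> obj b'"
  shows "c * n * norm (b - \<beta>) \<le> 2 * (norm zz + WA)"
proof -
  define u where "u = b - \<beta>"
  have "obj b \<le> obj \<beta>" using min by simp
  then have 1: "qB x n u u - 2 * (u \<bullet> zz) + 2 * (\<Sum>j\<in>UNIV. ww j * \<bar>b $ j\<bar>) \<le> 2 * (\<Sum>j\<in>UNIV. ww j * \<bar>\<beta> $ j\<bar>)"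
    by (simp add: obj_eq qB_zero u_def)
  have 2: "(\<Sum>j\<in>UNIV. ww j * \<bar>\<beta> $ j\<bar>) - (\<Sum>j\<in>UNIV. ww j * \<bar>b $ j\<bar>) \<le> WA * norm u"
  proof -
    have "(\<Sum>j\<in>UNIV. ww j * \<bar>\<beta> $ j\<bar>) - (\<Sum>j\<in>UNIV. ww j * \<bar>b $ j\<bar>)
        = (\<Sum>j\<in>UNIV. ww j * \<bar>\<beta> $ j\<bar> - ww j * \<bar>b $ j\<bar>)" by (simp add: sum_subtractf)
    also have "\<dots> \<le> (\<Sum>j\<in>UNIV. (if \<beta> $ j \<noteq> 0 then ww j else 0) * norm u)"
    proof (rule sum_mono)
      fix j :: 'p
      have "\<bar>\<beta> $ j\<bar> - \<bar>b $ j\<bar> \<le> norm u"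
        using component_le_norm_cart[of u j] by (simp add: u_def) 
      then show "ww j * \<bar>\<beta> $ j\<bar> - ww j * \<bar>b $ j\<bar> \<le> (if \<beta> $ j \<noteq> 0 then ww j else 0) * norm u"
        using ww_nn[of j] by (auto simp: right_diff_distrib[symmetric] intro: mult_left_mono)
    qed
    also have "\<dots> = WA * norm u" by (simp add: WA_def sum_distrib_right)
    finally show ?thesis .
  qed
  have 3: "u \<bullet> zz \<le> norm u * norm zz" by (rule Cauchy_Schwarz_ineq2[THEN order_trans[OF abs_ge_self]])
  have 4: "c * n * (norm u)^2 \<le> qB x n u u" by (rule Gpos)
  from 1 2 3 4 have 5: "c * n * (norm u)^2 \<le> norm u * (2 * (norm zz + WA))" by (simp add: algebra_simps)
  show ?thesis
  proof (cases "u = 0")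
    case True then show ?thesis using WA_nn by (simp add: u_def)
  next
    case False
    then have "norm u > 0" by simp
    with 5 show ?thesis unfolding u_def[symmetric] by (simp add: power2_eq_square mult.assoc)
  qed
qed

lemma inactive_zero:
  assumes min: "\<forall>b'. obj b \<le> obj b'"
    and big: "\<And>j. \<beta> $ j = 0 \<Longrightarrow> ww j > norm zz + 3/2 * K * n * norm (b - \<beta>)"
  shows "\<beta> $ j = 0 \<Longrightarrow> b $ j = 0"
proof (rule ccontr)
  assume bj: "\<beta> $ j = 0" and nz: "b $ j \<noteq> 0"
  define u where "u = b - \<beta>"
  define d where "d = (\<chi> k. if \<beta> $ k = 0 then u $ k else 0)"
  define R where "R = norm zz + 3/2 * K * n * norm u"
  have dk: "d $ k = (if \<beta> $ k = 0 then b $ k else 0)" for k by (simp add: d_def u_def)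
  have "obj b \<le> obj (b - d)" using min by simp
  moreover have "b - d - \<beta> = u - d" by (simp add: u_def)
  ultimately have 1: "qB x n u u - 2 * (u \<bullet> zz) + 2 * (\<Sum>k\<in>UNIV. ww k * \<bar>b $ k\<bar>)
     \<le> qB x n (u - d) (u - d) - 2 * ((u - d) \<bullet> zz) + 2 * (\<Sum>k\<in>UNIV. ww k * \<bar>(b - d) $ k\<bar>)"
    by (simp add: obj_eq u_def)
  have qe: "qB x n (u - d) (u - d) = qB x n u u - 2 * qB x n d u + qB x n d d"
    by (simp add: qB_diff1 qB_diff2 qB_sym[of x n u d])
  have pe: "(\<Sum>k\<in>UNIV. ww k * \<bar>b $ k\<bar>) - (\<Sum>k\<in>UNIV. ww k * \<bar>(b - d) $ k\<bar>) = (\<Sum>k\<in>UNIV. ww k * \<bar>d $ k\<bar>)"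
    unfolding sum_subtractf[symmetric] by (rule sum.cong) (auto simp: dk)
  have dn: "norm d \<le> norm u" unfolding d_def by (rule mask_norm)
  have a: "- qB x n d u \<le> K * n * norm d * norm u" using qB_ge[of d u] by simp
  have b: "qB x n d d \<le> K * n * norm d * norm u"
    using qB_le[of d d] dn
    using qB_le[of d d] dn Knn by (smt (verit) mult_left_mono mult_nonneg_nonneg norm_ge_zero of_nat_0_le_iff)
  have cz: "d \<bullet> zz \<le> norm d * norm zz" by (rule Cauchy_Schwarz_ineq2[THEN order_trans[OF abs_ge_self]])
  have e1: "norm d * R = norm d * norm zz + 3/2 * (K * n * norm d * norm u)" by (simp add: R_def algebra_simps)
  have e2: "(u - d) \<bullet> zz = u \<bullet> zz - d \<bullet> zz" by (simp add: inner_diff_left)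
  from 1 qe pe a b cz e1 e2 have P: "(\<Sum>k\<in>UNIV. ww k * \<bar>d $ k\<bar>) \<le> norm d * R"
    by linarith
  have Rnn: "R \<ge> 0" unfolding R_def
    using Knn by simp
  have "norm d \<le> (\<Sum>k\<in>UNIV. \<bar>d $ k\<bar>)" by (rule norm_le_l1_cart)
  then have "norm d * R \<le> (\<Sum>k\<in>UNIV. R * \<bar>d $ k\<bar>)" using Rnn by (simp add: sum_distrib_left[symmetric] mult.commute[of _ R] mult_left_mono)
  also have "\<dots> < (\<Sum>k\<in>UNIV. ww k * \<bar>d $ k\<bar>)"
  proof (rule sum_strict_mono_ex1)
    show "\<forall>k\<in>UNIV. R * \<bar>d $ k\<bar> \<le> ww k * \<bar>d $ k\<bar>"
    proof
      fix k :: 'p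
      show "R * \<bar>d $ k\<bar> \<le> ww k * \<bar>d $ k\<bar>"
      proof (cases "\<beta> $ k = 0")
        case True
        then have "R < ww k" using big[of k] by (simp add: R_def u_def)
        then show ?thesis by (intro mult_right_mono) auto
      qed (simp add: dk)
    qed
    show "\<exists>k\<in>UNIV. R * \<bar>d $ k\<bar> < ww k * \<bar>d $ k\<bar>"
      using big[OF bj] nz bj by (intro bexI[of _ j]) (auto simp: dk R_def u_def)
  qed simp
  finally show False using P by simp
qed

end


context det begin

lemma obj_cont: "continuous_on UNIV obj"
  unfolding obj_def[abs_def] using al_obj_cont[of x n lam "resp x \<beta> e"] by (simp add: fun_eq_iff)

lemma obj_lower: "obj b \<ge> c * n * (norm (b - \<beta>))^2 - 2 * norm (b - \<beta>) * norm zz + (\<Sum>i<n. (e i)^2)"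
proof -
  have "(b - \<beta>) \<bullet> zz \<le> norm (b - \<beta>) * norm zz" by (rule Cauchy_Schwarz_ineq2[THEN order_trans[OF abs_ge_self]])
  moreover have "0 \<le> (\<Sum>j\<in>UNIV. ww j * \<bar>b $ j\<bar>)" by (intro sum_nonneg mult_nonneg_nonneg ww_nn) auto
  moreover note Gpos[of "b - \<beta>"]
  ultimately show ?thesis unfolding obj_eq by linarith
qed

lemma exists_min:
  assumes S: "closed S" "s0 \<in> S"
  shows "\<exists>b\<in>S. \<forall>b'\<in>S. obj b \<le> obj b'"
proof -
  define E where "E = (\<Sum>i<n. (e i)^2)"
  define A where "A = \<bar>obj s0\<bar> + \<bar>E\<bar> + 1"
  define r where "r = max 1 ((2 * norm zz + A) / (c * n))"
  have cn: "c * n > 0" using cpos npos by simp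
  have far: "obj b' > obj s0" if "norm (b' - \<beta>) > r" for b'
  proof -
    define t where "t = norm (b' - \<beta>)"
    have t1: "t \<ge> 1" using that by (simp add: t_def r_def)
    have "(2 * norm zz + A) / (c * n) \<le> t" using that by (simp add: t_def r_def)
    then have "2 * norm zz + A \<le> c * n * t" using cn by (simp add: divide_le_eq mult.commute)
    then have "A \<le> c * n * t - 2 * norm zz" by simp
    moreover have "A \<ge> 0" by (simp add: A_def)
    ultimately have "A \<le> t * (c * n * t - 2 * norm zz)" using t1
      by (smt (verit, ccfv_SIG) mult_le_cancel_right1 mult.commute)
    then have "A \<le> c * n * t^2 - 2 * t * norm zz" by (simp add: algebra_simps power2_eq_square)
    moreover have "obj b' \<ge> c * n * t^2 - 2 * t * norm zz + E" using obj_lower[of b'] by (simp add: t_def E_def)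
    ultimately show ?thesis by (simp add: A_def)
  qed
  define T where "T = S \<inter> cball \<beta> r"
  have "compact T" unfolding T_def by (intro closed_Int_compact S compact_cball)
  moreover have s0T: "s0 \<in> T" using far[of s0] S by (force simp: T_def dist_norm norm_minus_commute)
  moreover have "continuous_on T obj" using obj_cont by (rule continuous_on_subset) simp
  ultimately obtain b where bT: "b \<in> T" and bm: "\<forall>y\<in>T. obj b \<le> obj y"
    using continuous_attains_inf by blast
  have "\<forall>b'\<in>S. obj b \<le> obj b'"
  proof
    fix b' assume "b' \<in> S"
    show "obj b \<le> obj b'"
    proof (cases "b' \<in> T")
      case True then show ?thesis using bm by blast
    next
      case False
      then have "norm (b' - \<beta>) > r" using \<open>b' \<in> S\<close> by (auto simp: T_def dist_norm norm_minus_commute)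
      then show ?thesis using far[of b'] bm s0T by force
    qed
  qed
  then show ?thesis using bT by (auto simp: T_def)
qed

lemma unique_min:
  assumes m1: "\<forall>b'. obj b1 \<le> obj b'" and m2: "\<forall>b'. obj b2 \<le> obj b'"
  shows "b1 = b2"
proof (rule ccontr)
  assume ne: "b1 \<noteq> b2"
  define u1 where "u1 = b1 - \<beta>"
  define u2 where "u2 = b2 - \<beta>"
  define m where "m = (1/2) *\<^sub>R (b1 + b2)"
  have mu: "m - \<beta> = (1/2) *\<^sub>R (u1 + u2)" by (simp add: m_def u1_def u2_def vec_eq_iff field_simps)
  have q: "qB x n (m - \<beta>) (m - \<beta>) = (qB x n u1 u1 + 2 * qB x n u1 u2 + qB x n u2 u2) / 4"
    unfolding mu by (simp add: qB_scale1 qB_scale2 qB_add1 qB_add2 qB_sym[of x n u2 u1]) (simp add: field_simps)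
  have qd: "qB x n (u1 - u2) (u1 - u2) = qB x n u1 u1 - 2 * qB x n u1 u2 + qB x n u2 u2"
    by (simp add: qB_diff1 qB_diff2 qB_sym[of x n u2 u1])
  have l: "(m - \<beta>) \<bullet> zz = (u1 \<bullet> zz + u2 \<bullet> zz) / 2" unfolding mu by (simp add: inner_add_left)
  have p: "(\<Sum>j\<in>UNIV. ww j * \<bar>m $ j\<bar>) \<le> ((\<Sum>j\<in>UNIV. ww j * \<bar>b1 $ j\<bar>) + (\<Sum>j\<in>UNIV. ww j * \<bar>b2 $ j\<bar>)) / 2"
  proof -
    have "(\<Sum>j\<in>UNIV. ww j * \<bar>m $ j\<bar>) \<le> (\<Sum>j\<in>UNIV. (ww j * \<bar>b1 $ j\<bar> + ww j * \<bar>b2 $ j\<bar>) / 2)"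
    proof (rule sum_mono)
      fix j :: 'p
      have "\<bar>m $ j\<bar> \<le> (\<bar>b1 $ j\<bar> + \<bar>b2 $ j\<bar>) / 2" by (simp add: m_def)
      then have "ww j * \<bar>m $ j\<bar> \<le> ww j * ((\<bar>b1 $ j\<bar> + \<bar>b2 $ j\<bar>) / 2)" by (rule mult_left_mono) (rule ww_nn)
      then show "ww j * \<bar>m $ j\<bar> \<le> (ww j * \<bar>b1 $ j\<bar> + ww j * \<bar>b2 $ j\<bar>) / 2" by (simp add: algebra_simps)
    qed
    also have "\<dots> = ((\<Sum>j\<in>UNIV. ww j * \<bar>b1 $ j\<bar>) + (\<Sum>j\<in>UNIV. ww j * \<bar>b2 $ j\<bar>)) / 2"
      by (simp add: sum_divide_distrib[symmetric] sum.distrib)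
    finally show ?thesis .
  qed
  have pos: "qB x n (u1 - u2) (u1 - u2) > 0"
  proof -
    have "u1 - u2 \<noteq> 0" using ne by (simp add: u1_def u2_def)
    then have "c * n * (norm (u1 - u2))^2 > 0" using cpos npos by simp
    then show ?thesis using Gpos[of "u1 - u2"] by linarith
  qed
  have o1: "obj b1 \<le> obj m" and o2: "obj b2 \<le> obj m" using m1 m2 by auto
  have o3: "obj b1 = obj b2" using m1 m2 by (simp add: order_antisym)
  show False using o1 o3 q qd l p pos unfolding obj_eq u1_def[symmetric] u2_def[symmetric]
    by (simp add: field_simps)
qed

lemma exists_global_min: "\<exists>b. \<forall>b'. obj b \<le> obj b'"
  using exists_min[of UNIV 0] by auto

definition "Pj j v = (\<chi> k. if k = j then 0 else v $ k)"

lemma char: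
  assumes min: "\<forall>b'. obj bh \<le> obj b'"
    and dense: "\<forall>X. open X \<longrightarrow> X \<noteq> {} \<longrightarrow> (\<exists>d\<in>D. d \<in> X)"
  shows "bh $ j = 0 \<longleftrightarrow> (\<forall>d'\<in>D. \<forall>k::nat. \<exists>d\<in>Pj j ` D. obj d < obj d' + 1 / Suc k)"
proof
  have cont: "\<forall>\<epsilon>>0. \<exists>\<delta>>0. \<forall>y. dist y bh < \<delta> \<longrightarrow> dist (obj y) (obj bh) < \<epsilon>"
    using obj_cont unfolding continuous_on_iff by blast
  {
    assume bj: "bh $ j = 0"
    show "\<forall>d'\<in>D. \<forall>k::nat. \<exists>d\<in>Pj j ` D. obj d < obj d' + 1 / Suc k"
    proof (intro ballI allI)
      fix d' k
      obtain \<delta> where dp: "\<delta> > 0" and dd: "\<forall>y. dist y bh < \<delta> \<longrightarrow> dist (obj y) (obj bh) < 1 / Suc k"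
        using cont[rule_format, of "1 / Suc k"] by auto
      obtain d0 where d0: "d0 \<in> D" "d0 \<in> ball bh \<delta>" using dense[rule_format, of "ball bh \<delta>"] dp by auto
      have "Pj j d0 - bh = Pj j (d0 - bh)" using bj by (simp add: Pj_def vec_eq_iff)
      moreover have "Pj j (d0 - bh) = (\<chi> k. if k \<noteq> j then (d0 - bh) $ k else 0)" by (simp add: Pj_def vec_eq_iff)
      ultimately have "norm (Pj j d0 - bh) \<le> norm (d0 - bh)"
        using mask_norm[of "\<lambda>k. k \<noteq> j" "d0 - bh"] by simp
      then have "dist (Pj j d0) bh < \<delta>" using d0 by (simp add: dist_norm dist_commute norm_minus_commute)
      then have "obj (Pj j d0) < obj bh + 1 / Suc k" using dd by (auto simp: dist_real_def)
      also have "\<dots> \<le> obj d' + 1 / Suc k" using min by simp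
      finally show "\<exists>d\<in>Pj j ` D. obj d < obj d' + 1 / Suc k" using d0 by blast
    qed
  }
  {
    assume R: "\<forall>d'\<in>D. \<forall>k::nat. \<exists>d\<in>Pj j ` D. obj d < obj d' + 1 / Suc k"
    show "bh $ j = 0"
    proof (rule ccontr)
      assume bj: "bh $ j \<noteq> 0"
      define Z where "Z = {v :: real^'p. v $ j = 0}"
      have "closed Z" unfolding Z_def by (intro closed_Collect_eq continuous_intros)
      then obtain zs where zs: "zs \<in> Z" "\<forall>b'\<in>Z. obj zs \<le> obj b'"
        using exists_min[of Z 0] by (auto simp: Z_def)
      have gt: "obj zs > obj bh"
      proof (rule ccontr)
        assume "\<not> obj zs > obj bh"
        then have "\<forall>b'. obj zs \<le> obj b'" using min by (meson not_less order_trans)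
        then have "zs = bh" using unique_min min by blast
        then show False using zs bj by (simp add: Z_def)
      qed
      define \<eta> where "\<eta> = obj zs - obj bh"
      have ep: "\<eta> > 0" using gt by (simp add: \<eta>_def)
      obtain \<delta> where dp: "\<delta> > 0" and dd: "\<forall>y. dist y bh < \<delta> \<longrightarrow> dist (obj y) (obj bh) < \<eta>/2"
        using cont[rule_format, of "\<eta>/2"] ep by auto
      obtain d' where d': "d' \<in> D" "d' \<in> ball bh \<delta>" using dense[rule_format, of "ball bh \<delta>"] dp by auto
      have "dist d' bh < \<delta>" using d' by (simp add: dist_commute)
      then have "dist (obj d') (obj bh) < \<eta>/2" using dd by blast
      moreover have "obj d' - obj bh \<le> \<bar>obj d' - obj bh\<bar>" by (rule abs_ge_self)
      ultimately have od': "obj d' < obj bh + \<eta>/2" unfolding dist_real_def by linarith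
      obtain k where k: "inverse (real (Suc k)) < \<eta>/2" using reals_Archimedean[of "\<eta>/2"] ep by auto
      obtain d where d: "d \<in> Pj j ` D" "obj d < obj d' + 1 / Suc k" using R d' by blast
      have "d \<in> Z" using d by (auto simp: Z_def Pj_def)
      then have "obj d \<ge> obj zs" using zs by blast
      moreover have "1 / real (Suc k) < \<eta>/2" using k by (simp add: inverse_eq_divide)
      ultimately show False using d(2) od' unfolding \<eta>_def by argo
    qed
  }
qed

end


context det begin

lemma pattern:
  assumes min: "\<forall>b'. obj b \<le> obj b'"
    and Mpos: "M > 0" and zb: "norm zz \<le> M * sqrt n"
    and lnz: "\<forall>j. lsq x n (resp x \<beta> e) $ j \<noteq> 0"
    and mpos: "m > 0" and mb: "\<forall>j. \<beta> $ j \<noteq> 0 \<longrightarrow> m \<le> \<bar>\<beta> $ j\<bar>"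
    and Lb: "\<forall>j. lam j \<le> L"
    and c1: "M / (c * sqrt n) \<le> m / 2"
    and c2: "2 * (M * sqrt n + CARD('p) * (2 * L / m)) / (c * n) < m"
    and c3: "\<forall>j. \<beta> $ j = 0 \<longrightarrow> lam j * (c * sqrt n) / M >
               M * sqrt n + 3/2 * K * n * (2 * (M * sqrt n + CARD('p) * (2 * L / m)) / (c * n))"
  shows "\<forall>j. b $ j \<noteq> 0 \<longleftrightarrow> \<beta> $ j \<noteq> 0"
proof -
  define U where "U = 2 * (M * sqrt n + CARD('p) * (2 * L / m)) / (c * n)"
  define \<delta> where "\<delta> = lsq x n (resp x \<beta> e) - \<beta>"
  have sn: "sqrt n * sqrt n = n" by simp
  have snp: "sqrt n > 0" using npos by simp
  have cn: "c * n > 0" using cpos npos by simp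
  have db: "norm \<delta> \<le> M / (c * sqrt n)"
  proof -
    have "c * n * norm \<delta> \<le> M * sqrt n" using delta_bound zb by (simp add: \<delta>_def)
    then have "norm \<delta> \<le> M * sqrt n / (c * n)" using cn by (simp add: le_divide_eq mult.commute)
    also have "M * sqrt n / (c * n) = M / (c * sqrt n)"
    proof -
      have e1: "c * n = (c * sqrt n) * sqrt n" using sn by (simp add: mult.assoc)
      have "M * sqrt n / (c * n) = (M * sqrt n) / ((c * sqrt n) * sqrt n)" by (simp only: e1)
      also have "\<dots> = M / (c * sqrt n)" using snp by (simp only: mult_divide_mult_cancel_right)
      finally show ?thesis .
    qed
    finally show ?thesis .
  qed
  have dj: "\<bar>\<delta> $ j\<bar> \<le> M / (c * sqrt n)" for j using component_le_norm_cart[of \<delta> j] db by simp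
  have WAb: "WA \<le> CARD('p) * (2 * L / m)"
  proof -
    have "WA \<le> (\<Sum>j\<in>(UNIV::'p set). 2 * L / m)" unfolding WA_def
    proof (rule sum_mono)
      fix j :: 'p
      show "(if \<beta> $ j \<noteq> 0 then ww j else 0) \<le> 2 * L / m"
      proof (cases "\<beta> $ j \<noteq> 0")
        case True
        have "\<bar>lsq x n (resp x \<beta> e) $ j\<bar> \<ge> \<bar>\<beta> $ j\<bar> - \<bar>\<delta> $ j\<bar>" by (simp add: \<delta>_def)
        then have ge: "\<bar>lsq x n (resp x \<beta> e) $ j\<bar> \<ge> m / 2" using mb[rule_format, OF True] dj[of j] c1 by argo
        have "ww j = lam j / \<bar>lsq x n (resp x \<beta> e) $ j\<bar>" by (simp add: ww_def)
        also have "\<dots> \<le> lam j / (m / 2)" using ge mpos lam_nn[of j] by (intro divide_left_mono) auto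
        also have "\<dots> \<le> L / (m / 2)" using Lb mpos by (intro divide_right_mono) auto
        finally show ?thesis using True by (simp add: mult.commute)
      next
        case False
        have "0 \<le> lam j" by (rule lam_nn)
        then show ?thesis using False Lb mpos by (simp add: order_trans[OF _ spec[OF Lb]])
      qed
    qed
    then show ?thesis by simp
  qed
  have ub: "norm (b - \<beta>) \<le> U"
  proof -
    have "c * n * norm (b - \<beta>) \<le> 2 * (M * sqrt n + CARD('p) * (2 * L / m))"
      using rate[OF min] zb WAb by argo
    then show ?thesis unfolding U_def using cn by (simp add: le_divide_eq mult.commute)
  qed
  have inact: "b $ j = 0" if bj: "\<beta> $ j = 0" for j
  proof (rule inactive_zero[OF min _ bj])
    fix j assume bj: "\<beta> $ j = 0"
    have l0: "lsq x n (resp x \<beta> e) $ j \<noteq> 0" using lnz by simp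
    have "\<bar>lsq x n (resp x \<beta> e) $ j\<bar> \<le> M / (c * sqrt n)" using dj[of j] bj by (simp add: \<delta>_def)
    then have "lam j / (M / (c * sqrt n)) \<le> lam j / \<bar>lsq x n (resp x \<beta> e) $ j\<bar>"
      using l0 lam_nn[of j] Mpos cpos snp by (intro divide_left_mono) auto
    then have w: "lam j * (c * sqrt n) / M \<le> ww j" by (simp add: ww_def)
    have "3/2 * K * n * norm (b - \<beta>) \<le> 3/2 * K * n * U" using ub Knn by (intro mult_left_mono) auto
    then show "ww j > norm zz + 3/2 * K * n * norm (b - \<beta>)"
      using w c3[rule_format, OF bj] zb unfolding U_def by argo
  qed
  have act: "b $ j \<noteq> 0" if bj: "\<beta> $ j \<noteq> 0" for j
  proof -
    have "\<bar>(b - \<beta>) $ j\<bar> \<le> U" using component_le_norm_cart[of "b - \<beta>" j] ub by simp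
    moreover have "m \<le> \<bar>\<beta> $ j\<bar>" using mb bj by blast
    moreover have "U < m" using c2 by (simp add: U_def)
    ultimately show ?thesis by auto
  qed
  show ?thesis using inact act by blast
qed

end


lemma C_min:
  fixes C :: "real^'p::finite^'p"
  assumes "pos_def C"
  shows "\<exists>c0>0. \<forall>v. c0 * (norm v)^2 \<le> v \<bullet> (C *v v)"
proof -
  have pd: "v \<noteq> 0 \<Longrightarrow> v \<bullet> (C *v v) > 0" for v using assms by (simp add: pos_def_def)
  have "compact (sphere (0::real^'p) 1)" by simp
  moreover have "sphere (0::real^'p) 1 \<noteq> {}"
    using norm_axis_1[of undefined] by (auto simp: sphere_def intro!: exI[of _ "axis undefined (1::real)"])
  moreover have "continuous_on (sphere 0 1) (\<lambda>v::real^'p. v \<bullet> (C *v v))"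
    by (intro continuous_intros bounded_linear.continuous_on[OF matrix_vector_mul_bounded_linear])
  ultimately obtain v0 where v0: "v0 \<in> sphere 0 1" "\<forall>y\<in>sphere 0 1. v0 \<bullet> (C *v v0) \<le> y \<bullet> (C *v y)"
    using continuous_attains_inf by blast
  have v0nz: "v0 \<noteq> 0" using v0(1) by auto
  define c0 where "c0 = v0 \<bullet> (C *v v0)"
  have c0p: "c0 > 0" using pd[OF v0nz] by (simp add: c0_def)
  have "c0 * (norm v)^2 \<le> v \<bullet> (C *v v)" for v
  proof (cases "v = 0")
    case True then show ?thesis by simp
  next
    case False
    define w where "w = (1 / norm v) *\<^sub>R v"
    have w1: "w \<in> sphere 0 1" using False by (simp add: w_def)
    have vw: "v = norm v *\<^sub>R w" using False by (simp add: w_def)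
    have "v \<bullet> (C *v v) = (norm v)^2 * (w \<bullet> (C *v w))"
      by (subst (1 2) vw) (simp add: matrix_scaleR_vector_ac scaleR_matrix_vector_assoc[symmetric] power2_eq_square)
    moreover have "c0 \<le> w \<bullet> (C *v w)" using v0(2) w1 by (simp add: c0_def)
    ultimately show ?thesis by (simp add: mult.commute[of "(norm v)^2"] mult_right_mono)
  qed
  then show ?thesis using c0p by blast
qed

lemma gram_bounds:
  fixes X :: "nat \<Rightarrow> nat \<Rightarrow> real^'p::finite" and C :: "real^'p^'p"
  assumes gram_lim: "(\<lambda>n. (1 / real n) *\<^sub>R gram (X n) n) \<longlonglongrightarrow> C"
    and C_pd: "pos_def C"
  shows "\<exists>c>0. \<exists>K\<ge>0. \<exists>N. \<forall>n\<ge>N. n > 0 \<and> (\<forall>v. c * n * (norm v)^2 \<le> qB (X n) n v v)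
           \<and> (\<forall>v. norm (gram (X n) n *v v) \<le> K * n * norm v)"
proof -
  obtain c0 where c0: "c0 > 0" "\<forall>v. c0 * (norm v)^2 \<le> v \<bullet> (C *v v)" using C_min[OF C_pd] by blast
  define p where "p = real CARD('p)"
  have pp: "p > 0" by (simp add: p_def)
  define \<epsilon> where "\<epsilon> = c0 / (2 * p * p)"
  have ep: "\<epsilon> > 0" using c0 pp by (simp add: \<epsilon>_def)
  obtain N0 where N0: "\<forall>n\<ge>N0. norm ((1 / real n) *\<^sub>R gram (X n) n - C) < \<epsilon>"
    using gram_lim ep unfolding LIMSEQ_iff by blast
  define K where "K = onorm ((*v) C) + c0 / 2"
  have Kp: "K \<ge> 0" using onorm_pos_le[OF matrix_vector_mul_bounded_linear[of C]] c0 by (simp add: K_def)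
  have main: "n > 0 \<and> (\<forall>v. c0 / 2 * n * (norm v)^2 \<le> qB (X n) n v v)
           \<and> (\<forall>v. norm (gram (X n) n *v v) \<le> K * n * norm v)" if n: "n \<ge> max N0 1" for n
  proof -
    define A where "A = (1 / real n) *\<^sub>R gram (X n) n"
    have np: "n > 0" using n by simp
    have An: "norm (A - C) < \<epsilon>" using N0 n by (simp add: A_def)
    have ent: "\<bar>(A - C) $ i $ j\<bar> \<le> \<epsilon>" for i j
      using component_le_norm_cart[of "(A - C) $ i" j] Finite_Cartesian_Product.norm_nth_le[of "A - C" i] An by simp
    have "onorm ((*v) (A - C)) \<le> p * p * \<epsilon>"
      using onorm_le_matrix_component[of "A - C" \<epsilon>, OF ent] by (simp add: p_def)
    also have "\<dots> = c0 / 2" using pp by (simp add: \<epsilon>_def)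
    finally have on: "onorm ((*v) (A - C)) \<le> c0 / 2" .
    have dv: "norm ((A - C) *v v) \<le> c0 / 2 * norm v" for v
      using onorm[OF matrix_vector_mul_bounded_linear[of "A - C"], of v] on
      by (meson mult_right_mono norm_ge_zero order_trans)
    have Gv: "gram (X n) n *v v = real n *\<^sub>R (A *v v)" for v
      using np by (simp add: A_def scaleR_matrix_vector_assoc[symmetric])
    have q: "c0 / 2 * n * (norm v)^2 \<le> qB (X n) n v v" for v
    proof -
      have "qB (X n) n v v = real n * (v \<bullet> (A *v v))" by (simp add: inner_gram[symmetric] Gv)
      also have "v \<bullet> (A *v v) = v \<bullet> (C *v v) + v \<bullet> ((A - C) *v v)"
        by (simp add: matrix_vector_mult_diff_rdistrib inner_diff_right)
      finally have e: "qB (X n) n v v = real n * (v \<bullet> (C *v v) + v \<bullet> ((A - C) *v v))" .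
      have "- (norm v * norm ((A - C) *v v)) \<le> v \<bullet> ((A - C) *v v)"
        using Cauchy_Schwarz_ineq2[of v "(A - C) *v v"] by linarith
      moreover have "norm v * norm ((A - C) *v v) \<le> norm v * (c0 / 2 * norm v)"
        using dv[of v] by (intro mult_left_mono) auto
      ultimately have "c0 / 2 * (norm v)^2 \<le> v \<bullet> (C *v v) + v \<bullet> ((A - C) *v v)"
        using c0(2)[rule_format, of v] by (simp add: power2_eq_square) argo
      then have "real n * (c0 / 2 * (norm v)^2) \<le> real n * (v \<bullet> (C *v v) + v \<bullet> ((A - C) *v v))"
        by (intro mult_left_mono) auto
      then show ?thesis using e by (simp add: mult_ac)
    qed
    have g: "norm (gram (X n) n *v v) \<le> K * n * norm v" for v
    proof -
      have "norm (A *v v) \<le> norm (C *v v) + norm ((A - C) *v v)"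
        by (metis matrix_vector_mult_diff_rdistrib norm_triangle_sub add.commute)
      also have "\<dots> \<le> onorm ((*v) C) * norm v + c0 / 2 * norm v"
        using onorm[OF matrix_vector_mul_bounded_linear[of C], of v] dv by (intro add_mono) auto
      finally have "norm (A *v v) \<le> K * norm v" by (simp add: K_def algebra_simps)
      then have "real n * norm (A *v v) \<le> real n * (K * norm v)" by (simp add: mult_left_mono)
      then show ?thesis by (simp add: Gv mult_ac)
    qed
    show ?thesis using np q g by blast
  qed
  show ?thesis using c0(1) Kp main by (intro exI[of _ "c0/2"] conjI exI[of _ K] exI[of _ "max N0 1"]) auto
qed



lemma coord_meas:
  fixes n :: nat and D :: "real measure"
  assumes D_sets: "sets D = sets borel" and i: "i < n"
  shows "(\<lambda>e. e i) \<in> borel_measurable (PiM {..<n} (\<lambda>_. D))"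
proof -
  have "(\<lambda>e. e i) \<in> measurable (PiM {..<n} (\<lambda>_. D)) D" using i by (intro measurable_component_singleton) auto
  then show ?thesis using measurable_cong_sets[OF refl D_sets] by blast
qed

lemma Eprod:
  fixes n :: nat and D :: "real measure"
  assumes D_prob: "prob_space D" and D_sets: "sets D = sets borel"
    and D_int: "integrable D (\<lambda>x. x)" and D_mean: "integral\<^sup>L D (\<lambda>x. x) = 0"
    and D_int2: "integrable D (\<lambda>x. x\<^sup>2)"
    and ij: "i < n" "j < n"
  shows "integrable (PiM {..<n} (\<lambda>_. D)) (\<lambda>e. e i * e j)"
    "integral\<^sup>L (PiM {..<n} (\<lambda>_. D)) (\<lambda>e. e i * e j) = (if i = j then integral\<^sup>L D (\<lambda>x. x\<^sup>2) else 0)"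
proof -
  interpret D: prob_space D by (rule D_prob)
  interpret product_sigma_finite "\<lambda>_::nat. D" ..
  define f where "f k t = (if k = i then t else 1) * (if k = j then (t::real) else 1)" for k t
  have pe: "(\<Prod>k\<in>{..<n}. f k (e k)) = e i * e j" for e
  proof -
    have "(\<Prod>k\<in>{..<n}. f k (e k)) = (\<Prod>k\<in>{..<n}. if k = i then e k else 1) * (\<Prod>k\<in>{..<n}. if k = j then e k else 1)"
      by (simp add: f_def prod.distrib)
    also have "(\<Prod>k\<in>{..<n}. if k = i then e k else 1) = e i" using ij(1) by (subst prod.delta) (auto intro: finite_lessThan)
    also have "(\<Prod>k\<in>{..<n}. if k = j then e k else 1) = e j" using ij(2) by (subst prod.delta) (auto intro: finite_lessThan)
    finally show ?thesis .
  qed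
  have fcases: "(k = i \<and> k = j \<and> f k = (\<lambda>t. t\<^sup>2)) \<or> (k \<noteq> i \<and> k \<noteq> j \<and> f k = (\<lambda>t. 1))
     \<or> ((k = i \<or> k = j) \<and> \<not> (k = i \<and> k = j) \<and> f k = (\<lambda>t. t))" for k
    by (auto simp: f_def fun_eq_iff power2_eq_square)
  have fint: "integrable D (f k)" for k
    using fcases[of k] D_int D_int2 by auto
  have fI: "integral\<^sup>L D (f k) = (if k = i \<and> k = j then integral\<^sup>L D (\<lambda>x. x\<^sup>2) else if k = i \<or> k = j then 0 else 1)" for k
    using fcases[of k] D_mean D.prob_space by auto
  have "integrable (PiM {..<n} (\<lambda>_. D)) (\<lambda>e. \<Prod>k\<in>{..<n}. f k (e k))"
    by (rule product_integrable_prod) (auto simp: fint)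
  then show "integrable (PiM {..<n} (\<lambda>_. D)) (\<lambda>e. e i * e j)" by (simp add: pe)
  have "integral\<^sup>L (PiM {..<n} (\<lambda>_. D)) (\<lambda>e. \<Prod>k\<in>{..<n}. f k (e k)) = (\<Prod>k\<in>{..<n}. integral\<^sup>L D (f k))"
    by (rule product_integral_prod) (auto simp: fint)
  also have "\<dots> = (if i = j then integral\<^sup>L D (\<lambda>x. x\<^sup>2) else 0)"
  proof (cases "i = j")
    case True
    have "(\<Prod>k\<in>{..<n}. integral\<^sup>L D (f k)) = (\<Prod>k\<in>{..<n}. if k = i then integral\<^sup>L D (\<lambda>x. x\<^sup>2) else 1)"
      using True by (intro prod.cong) (auto simp: fI)
    also have "\<dots> = integral\<^sup>L D (\<lambda>x. x\<^sup>2)" using ij(1) by (subst prod.delta) auto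
    finally show ?thesis using True by simp
  next
    case False
    have "\<exists>k\<in>{..<n}. integral\<^sup>L D (f k) = 0" using ij False by (intro bexI[of _ i]) (auto simp: fI)
    then show ?thesis using False by simp
  qed
  finally show "integral\<^sup>L (PiM {..<n} (\<lambda>_. D)) (\<lambda>e. e i * e j) = (if i = j then integral\<^sup>L D (\<lambda>x. x\<^sup>2) else 0)"
    by (simp add: pe)
qed

lemma sum_sqnorm_bound:
  fixes x :: "nat \<Rightarrow> real^'p::finite" and K :: real
  assumes Gbd: "\<And>v. norm (gram x n *v v) \<le> K * n * norm v"
  shows "(\<Sum>i<n. x i \<bullet> x i) \<le> CARD('p) * K * n"
proof -
  have "(\<Sum>i<n. x i \<bullet> x i) = (\<Sum>i<n. \<Sum>k\<in>UNIV. x i $ k * x i $ k)" by (simp add: inner_vec_def)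
  also have "\<dots> = (\<Sum>k\<in>UNIV. \<Sum>i<n. x i $ k * x i $ k)" by (rule sum.swap)
  also have "\<dots> = (\<Sum>k\<in>UNIV. qB x n (axis k 1) (axis k 1))" by (simp add: qB_def inner_axis)
  also have "\<dots> \<le> (\<Sum>k\<in>(UNIV::'p set). K * n)"
  proof (rule sum_mono)
    fix k :: 'p
    have "qB x n (axis k 1) (axis k 1) = axis k 1 \<bullet> (gram x n *v axis k 1)" by (simp add: inner_gram)
    also have "\<dots> \<le> norm (axis k (1::real)) * norm (gram x n *v axis k 1)"
      by (rule Cauchy_Schwarz_ineq2[THEN order_trans[OF abs_ge_self]])
    also have "\<dots> \<le> K * n" using Gbd[of "axis k 1"] by simp
    finally show "qB x n (axis k 1) (axis k 1) \<le> K * n" .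
  qed
  also have "\<dots> = CARD('p) * K * n" by simp
  finally show ?thesis .
qed

lemma zsq_markov:
  fixes n :: nat and D :: "real measure" and x :: "nat \<Rightarrow> real^'p::finite" and K a :: real
  assumes D_prob: "prob_space D" and D_sets: "sets D = sets borel"
    and D_int: "integrable D (\<lambda>x. x)" and D_mean: "integral\<^sup>L D (\<lambda>x. x) = 0"
    and D_int2: "integrable D (\<lambda>x. x\<^sup>2)"
    and Gbd: "\<And>v. norm (gram x n *v v) \<le> K * n * norm v"
    and a: "a > 0"
  shows "measure (PiM {..<n} (\<lambda>_. D)) {e \<in> space (PiM {..<n} (\<lambda>_. D)). a \<le> (norm (\<Sum>i<n. e i *\<^sub>R x i))\<^sup>2}
     \<le> integral\<^sup>L D (\<lambda>x. x\<^sup>2) * CARD('p) * K * n / a"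
proof -
  define P where "P = PiM {..<n} (\<lambda>_. D)"
  define \<sigma> where "\<sigma> = integral\<^sup>L D (\<lambda>x. x\<^sup>2)"
  have sq: "(norm (\<Sum>i<n. e i *\<^sub>R x i))\<^sup>2 = (\<Sum>i<n. \<Sum>j<n. (x i \<bullet> x j) * (e i * e j))" for e
    by (simp add: power2_norm_eq_inner inner_sum_left inner_sum_right sum_distrib_left mult_ac inner_commute[of "x _" "x _"])
  have int: "integrable P (\<lambda>e. \<Sum>i<n. \<Sum>j<n. (x i \<bullet> x j) * (e i * e j))"
  proof (rule Bochner_Integration.integrable_sum, rule Bochner_Integration.integrable_sum)
    fix i j assume "i \<in> {..<n}" "j \<in> {..<n}"
    then show "integrable P (\<lambda>e. (x i \<bullet> x j) * (e i * e j))"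
      using Eprod(1)[OF D_prob D_sets D_int D_mean D_int2, of i n j] unfolding P_def
      by (intro integrable_mult_right) auto
  qed
  have "integral\<^sup>L P (\<lambda>e. \<Sum>i<n. \<Sum>j<n. (x i \<bullet> x j) * (e i * e j))
      = (\<Sum>i<n. \<Sum>j<n. (x i \<bullet> x j) * (if i = j then \<sigma> else 0))"
  proof -
    have ii: "integrable P (\<lambda>e. e i * e j)" if "i < n" "j < n" for i j
      using Eprod(1)[OF D_prob D_sets D_int D_mean D_int2 that] unfolding P_def .
    have ie: "integral\<^sup>L P (\<lambda>e. e i * e j) = (if i = j then \<sigma> else 0)" if "i < n" "j < n" for i j
      using Eprod(2)[OF D_prob D_sets D_int D_mean D_int2 that] unfolding P_def \<sigma>_def .
    have "integral\<^sup>L P (\<lambda>e. \<Sum>i<n. \<Sum>j<n. (x i \<bullet> x j) * (e i * e j))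
        = (\<Sum>i<n. integral\<^sup>L P (\<lambda>e. \<Sum>j<n. (x i \<bullet> x j) * (e i * e j)))"
      by (rule Bochner_Integration.integral_sum) (auto intro!: Bochner_Integration.integrable_sum integrable_mult_right ii)
    also have "\<dots> = (\<Sum>i<n. \<Sum>j<n. integral\<^sup>L P (\<lambda>e. (x i \<bullet> x j) * (e i * e j)))"
      by (intro sum.cong refl Bochner_Integration.integral_sum) (auto intro!: integrable_mult_right ii)
    also have "\<dots> = (\<Sum>i<n. \<Sum>j<n. (x i \<bullet> x j) * (if i = j then \<sigma> else 0))"
      by (intro sum.cong refl) (simp add: ie)
    finally show ?thesis .
  qed
  also have "\<dots> = \<sigma> * (\<Sum>i<n. x i \<bullet> x i)"
    by (simp add: sum_distrib_left mult.commute if_distrib sum.delta cong: if_cong)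
  finally have E: "integral\<^sup>L P (\<lambda>e. \<Sum>i<n. \<Sum>j<n. (x i \<bullet> x j) * (e i * e j)) = \<sigma> * (\<Sum>i<n. x i \<bullet> x i)" .
  have "measure P {e \<in> space P. a \<le> (\<Sum>i<n. \<Sum>j<n. (x i \<bullet> x j) * (e i * e j))}
      \<le> integral\<^sup>L P (\<lambda>e. \<Sum>i<n. \<Sum>j<n. (x i \<bullet> x j) * (e i * e j)) / a"
    by (rule integral_Markov_inequality_measure[OF int _ _ a]) (auto simp: sq[symmetric])
  also have "\<dots> \<le> \<sigma> * CARD('p) * K * n / a"
  proof -
    have "\<sigma> \<ge> 0" unfolding \<sigma>_def by (rule integral_nonneg_AE) auto
    then have "\<sigma> * (\<Sum>i<n. x i \<bullet> x i) \<le> \<sigma> * (CARD('p) * K * n)"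
      using sum_sqnorm_bound[OF Gbd] by (intro mult_left_mono) auto
    then show ?thesis using a unfolding E by (simp add: divide_right_mono mult_ac)
  qed
  finally show ?thesis unfolding P_def \<sigma>_def sq .
qed



lemma z_meas:
  fixes n :: nat and D :: "real measure" and x :: "nat \<Rightarrow> real^'p::finite"
  assumes D_sets: "sets D = sets borel"
  shows "(\<lambda>e. \<Sum>i<n. e i *\<^sub>R x i) \<in> borel_measurable (PiM {..<n} (\<lambda>_. D))"
  using coord_meas[OF D_sets] by (intro borel_measurable_sum borel_measurable_scaleR) auto

lemma lsq_meas:
  fixes n :: nat and D :: "real measure" and x :: "nat \<Rightarrow> real^'p::finite"
  assumes D_sets: "sets D = sets borel"
  shows "(\<lambda>e. lsq x n (resp x \<beta> e) $ j) \<in> borel_measurable (PiM {..<n} (\<lambda>_. D))"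
proof -
  have eq: "(\<lambda>e. lsq x n (resp x \<beta> e) $ j) =
     (\<lambda>v. (matrix_inv (gram x n) *v (gram x n *v \<beta> + v)) $ j) \<circ> (\<lambda>e. \<Sum>i<n. e i *\<^sub>R x i)"
    by (simp add: fun_eq_iff lsq_def resp_sum)
  have "continuous_on UNIV (\<lambda>v. (matrix_inv (gram x n) *v (gram x n *v \<beta> + v)) $ j)"
    by (intro continuous_intros bounded_linear.continuous_on[OF matrix_vector_mul_bounded_linear])
  then have "(\<lambda>v. (matrix_inv (gram x n) *v (gram x n *v \<beta> + v)) $ j) \<in> borel_measurable borel"
    by (rule borel_measurable_continuous_onI)
  then show ?thesis unfolding eq by (rule measurable_comp[OF z_meas[OF D_sets]])
qed

lemma obj_meas:
  fixes n :: nat and D :: "real measure" and x :: "nat \<Rightarrow> real^'p::finite"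
  assumes D_sets: "sets D = sets borel"
  shows "(\<lambda>e. al_obj x n lam (resp x \<beta> e) b) \<in> borel_measurable (PiM {..<n} (\<lambda>_. D))"
proof -
  have eq: "(\<lambda>e. al_obj x n lam (resp x \<beta> e) b) = (\<lambda>e. (\<Sum>i<n. (x i \<bullet> \<beta> + e i - x i \<bullet> b)^2)
      + 2 * (\<Sum>j\<in>UNIV. (lam j / \<bar>lsq x n (resp x \<beta> e) $ j\<bar>) * \<bar>b $ j\<bar>))"
    by (simp add: fun_eq_iff al_obj_alt resp_def)
  show ?thesis unfolding eq
    using coord_meas[OF D_sets] lsq_meas[OF D_sets]
    by (intro borel_measurable_add borel_measurable_sum borel_measurable_power borel_measurable_diff
        borel_measurable_times borel_measurable_divide borel_measurable_abs borel_measurable_const) auto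
qed



lemma al_min:
  assumes "det x n lam c K"
  shows "\<forall>b'. al_obj x n lam (resp x \<beta> e) (adaptive_lasso x n lam (resp x \<beta> e)) \<le> al_obj x n lam (resp x \<beta> e) b'"
proof -
  interpret det x n lam \<beta> e c K using assms by (simp add: det_def)
  show ?thesis using exists_global_min unfolding adaptive_lasso_def obj_def by (rule someI_ex)
qed

lemma event_meas:
  fixes n :: nat and D :: "real measure" and x :: "nat \<Rightarrow> real^'p::finite"
  assumes D_sets: "sets D = sets borel" and dt: "det x n lam c K"
  shows "{e \<in> space (PiM {..<n} (\<lambda>_. D)). \<forall>j. (adaptive_lasso x n lam (resp x \<beta> e) $ j \<noteq> 0) \<longleftrightarrow> \<beta> $ j \<noteq> 0}
      \<in> sets (PiM {..<n} (\<lambda>_. D))"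
proof -
  obtain Dd :: "(real^'p) set" where Dd: "countable Dd" "\<forall>X. open X \<longrightarrow> X \<noteq> {} \<longrightarrow> (\<exists>d\<in>Dd. d \<in> X)"
    using countable_dense_exists by blast
  have Dne: "Dd \<noteq> {}" using Dd(2)[rule_format, of UNIV] by auto
  define g where "g = from_nat_into Dd"
  have rg: "range g = Dd" unfolding g_def using Dd(1) Dne by simp
  define F where "F e b = al_obj x n lam (resp x \<beta> e) b" for e b
  define Pj' where "Pj' j v = (\<chi> k. if k = j then 0 else v $ k)" for j :: 'p and v :: "real^'p"
  have key: "(adaptive_lasso x n lam (resp x \<beta> e) $ j = 0) \<longleftrightarrow>
      (\<forall>m1. \<forall>k::nat. \<exists>m2. F e (Pj' j (g m2)) < F e (g m1) + 1 / Suc k)" for e j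
  proof -
    interpret det x n lam \<beta> e c K using dt by (simp add: det_def)
    have "(adaptive_lasso x n lam (resp x \<beta> e) $ j = 0) \<longleftrightarrow>
      (\<forall>d'\<in>Dd. \<forall>k::nat. \<exists>d\<in>Pj j ` Dd. obj d < obj d' + 1 / Suc k)"
      by (rule char) (use al_min[OF dt] Dd(2) in \<open>auto simp: obj_def\<close>)
    also have "\<dots> \<longleftrightarrow> (\<forall>m1. \<forall>k::nat. \<exists>m2. F e (Pj' j (g m2)) < F e (g m1) + 1 / Suc k)"
      unfolding rg[symmetric] by (simp add: F_def obj_def Pj_def Pj'_def)
    finally show ?thesis .
  qed
  have fm: "(\<lambda>e. F e b) \<in> borel_measurable (PiM {..<n} (\<lambda>_. D))" for b
    unfolding F_def by (rule obj_meas[OF D_sets])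
  have "{e \<in> space (PiM {..<n} (\<lambda>_. D)). \<forall>j. (adaptive_lasso x n lam (resp x \<beta> e) $ j \<noteq> 0) \<longleftrightarrow> \<beta> $ j \<noteq> 0}
    = {e \<in> space (PiM {..<n} (\<lambda>_. D)). \<forall>j\<in>UNIV. (\<not> (\<forall>m1. \<forall>k::nat. \<exists>m2. F e (Pj' j (g m2)) < F e (g m1) + 1 / Suc k)) \<longleftrightarrow> \<beta> $ j \<noteq> 0}"
    using key by auto
  also have "\<dots> \<in> sets (PiM {..<n} (\<lambda>_. D))"
    using fm by measurable
  finally show ?thesis .
qed



lemma conds:
  fixes s n c M m K p L :: real
  assumes s: "s > 0" "s * s = n" and cp: "c > 0" and Mp: "M > 0" and mp: "m > 0" and Kp: "K \<ge> 0"
    and pp: "p > 0" and Lp: "L \<ge> 0"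
    and h1: "s > 4 * M / (c * m)" and h2: "L \<le> m^2 * c * n / (8 * p)"
  shows "M / (c * s) \<le> m / 2"
    and "2 * (M * s + p * (2 * L / m)) / (c * n) < m"
    and "\<And>l. l > 2 * M * (M + 3 * K * M / c) / c \<Longrightarrow> s * l \<ge> 12 * K * p * M / (m * c^2) * L \<Longrightarrow>
           l * (c * s) / M > M * s + 3/2 * K * n * (2 * (M * s + p * (2 * L / m)) / (c * n))"
proof -
  have np: "n > 0" using s by (metis mult_pos_pos)
  have mcs: "m * c * s > 4 * M" using h1 cp mp by (simp add: divide_less_eq mult_ac)
  show "M / (c * s) \<le> m / 2" using mcs cp s Mp by (simp add: divide_le_eq field_simps)
  have a: "2 * M * s < m * c * n / 2"
  proof -
    have "4 * M * s < m * c * s * s" using mcs s(1) by (simp add: mult_strict_right_mono)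
    then show ?thesis using s(2) by (simp add: mult_ac)
  qed
  have b0: "4 * p * L / m \<le> m * c * n / 2"
  proof -
    have "4 * p * L \<le> 4 * p * (m^2 * c * n / (8 * p))" using h2 pp by (intro mult_left_mono) auto
    also have "\<dots> = m * (m * c * n / 2)" using pp by (simp add: field_simps power2_eq_square)
    finally show ?thesis using mp by (simp add: divide_le_eq mult.commute)
  qed
  have b: "4 * (p * L / m) \<le> m * c * n / 2" using b0 by simp
  have "2 * (M * s + p * (2 * L / m)) = 2 * M * s + 4 * (p * L / m)" by (simp add: field_simps)
  also have "\<dots> < m * c * n" using a b by argo
  also have "\<dots> = m * (c * n)" by simp
  finally show "2 * (M * s + p * (2 * L / m)) / (c * n) < m" using cp np by (simp add: divide_less_eq)
  fix l assume l1: "l > 2 * M * (M + 3 * K * M / c) / c" and l2: "s * l \<ge> 12 * K * p * M / (m * c^2) * L"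
  have e: "3/2 * K * n * (2 * (M * s + p * (2 * L / m)) / (c * n)) = 3 * K * M * s / c + 6 * K * p * L / (m * c)"
    using cp np mp by (simp add: field_simps)
  have lc: "l * (c * s) / M = l * c * s / (2 * M) + l * c * s / (2 * M)" by (simp add: field_simps)
  have x1: "l * c * s / (2 * M) > M * s + 3 * K * M * s / c"
  proof -
    have "l * c / (2 * M) > M + 3 * K * M / c" using l1 cp Mp by (simp add: field_simps)
    then have "l * c / (2 * M) * s > (M + 3 * K * M / c) * s" using s(1) by (intro mult_strict_right_mono)
    then show ?thesis by (simp add: field_simps)
  qed
  have x2: "l * c * s / (2 * M) \<ge> 6 * K * p * L / (m * c)"
  proof -
    have "l * c * s / (2 * M) = (s * l) * (c / (2 * M))" by (simp add: field_simps)
    also have "\<dots> \<ge> (12 * K * p * M / (m * c^2) * L) * (c / (2 * M))" using l2 cp Mp by (intro mult_right_mono) auto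
    finally show ?thesis using cp Mp mp by (simp add: field_simps power2_eq_square)
  qed
  show "l * (c * s) / M > M * s + 3/2 * K * n * (2 * (M * s + p * (2 * L / m)) / (c * n))"
    unfolding e lc using x1 x2 by argo
qed



lemma lam_star_ge: "(lam :: 'p::finite \<Rightarrow> real) j \<le> lam_star lam"
  unfolding lam_star_def by (rule Max_ge) auto

lemma eventually_conds:
  fixes lam :: "nat \<Rightarrow> 'p::finite \<Rightarrow> real" and c M m K p :: real
  assumes lam_nonneg: "\<forall>n j. lam n j \<ge> 0"
    and lamstar_lim: "(\<lambda>n. lam_star (lam n) / real n) \<longlonglongrightarrow> 0"
    and lam_inf: "\<forall>j. filterlim (\<lambda>n. lam n j) at_top sequentially"
    and lam_ratio: "\<forall>j. filterlim (\<lambda>n. sqrt (real n) * lam n j / lam_star (lam n)) at_top sequentially"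
    and cp: "c > 0" and Mp: "M > 0" and mp: "m > 0" and Kp: "K \<ge> 0" and pp: "p > 0"
  shows "eventually (\<lambda>n. n > 0 \<and> sqrt n > 4 * M / (c * m) \<and> lam_star (lam n) \<le> m^2 * c * n / (8 * p)
     \<and> (\<forall>j. lam n j > 2 * M * (M + 3 * K * M / c) / c
           \<and> sqrt n * lam n j \<ge> 12 * K * p * M / (m * c^2) * lam_star (lam n))) sequentially"
proof -
  define B1 where "B1 = 2 * M * (M + 3 * K * M / c) / c"
  define B2 where "B2 = 12 * K * p * M / (m * c^2)"
  have B1p: "B1 \<ge> 0" unfolding B1_def using cp Mp Kp by simp
  have e1: "eventually (\<lambda>n::nat. n > 0) sequentially" by (rule eventually_gt_at_top)
  have "filterlim (\<lambda>n. sqrt (real n)) at_top sequentially"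
    by (rule filterlim_compose[OF sqrt_at_top filterlim_real_sequentially])
  then have e2: "eventually (\<lambda>n. sqrt n > 4 * M / (c * m)) sequentially"
    unfolding filterlim_at_top_dense by blast
  have "eventually (\<lambda>n. lam_star (lam n) / real n < m^2 * c / (8 * p)) sequentially"
    using order_tendstoD(2)[OF lamstar_lim] mp cp pp by simp
  then have e3: "eventually (\<lambda>n. lam_star (lam n) \<le> m^2 * c * n / (8 * p)) sequentially"
  proof (rule eventually_mono[OF eventually_conj[OF _ e1]])
    fix n :: nat assume h: "lam_star (lam n) / real n < m^2 * c / (8 * p) \<and> n > 0"
    have rn: "real n > 0" using h by simp
    have "lam_star (lam n) < m^2 * c / (8 * p) * n" using pos_divide_less_eq[OF rn] h by blast
    also have "m^2 * c / (8 * p) * n = m^2 * c * n / (8 * p)" by simp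
    finally show "lam_star (lam n) \<le> m^2 * c * n / (8 * p)" by simp
  qed
  have e4: "eventually (\<lambda>n. \<forall>j. lam n j > B1 \<and> sqrt n * lam n j \<ge> B2 * lam_star (lam n)) sequentially"
  proof (rule eventually_all_finite)
    fix j
    have a: "eventually (\<lambda>n. lam n j > B1) sequentially"
      using lam_inf unfolding filterlim_at_top_dense by blast
    have b: "eventually (\<lambda>n. sqrt (real n) * lam n j / lam_star (lam n) > B2) sequentially"
      using lam_ratio unfolding filterlim_at_top_dense by blast
    show "eventually (\<lambda>n. lam n j > B1 \<and> sqrt n * lam n j \<ge> B2 * lam_star (lam n)) sequentially"
    proof (rule eventually_mono[OF eventually_conj[OF a b]])
      fix n assume h: "lam n j > B1 \<and> sqrt (real n) * lam n j / lam_star (lam n) > B2"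
      have Lp: "lam_star (lam n) > 0" using h B1p lam_star_ge[of "lam n" j] by linarith
      then have "B2 * lam_star (lam n) < sqrt (real n) * lam n j" using h by (simp add: less_divide_eq)
      then show "lam n j > B1 \<and> sqrt n * lam n j \<ge> B2 * lam_star (lam n)" using h by simp
    qed
  qed
  show ?thesis using eventually_conj[OF e1 eventually_conj[OF e2 eventually_conj[OF e3 e4]]]
    unfolding B1_def B2_def by simp
qed



theorem theorem2:
  fixes X :: "nat \<Rightarrow> nat \<Rightarrow> real^'p::finite"
    and lam :: "nat \<Rightarrow> 'p \<Rightarrow> real"
    and C :: "real^'p^'p"
    and D :: "real measure"
    and \<beta> :: "real^'p"
  assumes rank: "\<forall>n \<ge> CARD('p). full_col_rank (X n) n"
    and gram_lim: "(\<lambda>n. (1 / real n) *\<^sub>R gram (X n) n) \<longlonglongrightarrow> C"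
    and C_pd: "pos_def C"
    and lam_nonneg: "\<forall>n j. lam n j \<ge> 0"
    and D_prob: "prob_space D"
    and D_sets: "sets D = sets borel"
    and D_int: "integrable D (\<lambda>x. x)"
    and D_mean: "integral\<^sup>L D (\<lambda>x. x) = 0"
    and D_int2: "integrable D (\<lambda>x. x\<^sup>2)"
    and D_var: "integral\<^sup>L D (\<lambda>x. x\<^sup>2) > 0"
    and LS_nonzero: "\<forall>n \<ge> CARD('p). AE e in PiM {..<n} (\<lambda>_. D).
                        \<forall>j. lsq (X n) n (resp (X n) \<beta> e) $ j \<noteq> 0"
    and lamstar_lim: "(\<lambda>n. lam_star (lam n) / real n) \<longlonglongrightarrow> 0"
    and lam_inf: "\<forall>j. filterlim (\<lambda>n. lam n j) at_top sequentially"
    and lam_ratio: "\<forall>j. filterlim (\<lambda>n. sqrt (real n) * lam n j / lam_star (lam n)) at_top sequentially"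
  shows "(\<lambda>n. measure (PiM {..<n} (\<lambda>_. D))
            {e \<in> space (PiM {..<n} (\<lambda>_. D)).
               \<forall>j. (adaptive_lasso (X n) n (lam n) (resp (X n) \<beta> e) $ j \<noteq> 0) \<longleftrightarrow> \<beta> $ j \<noteq> 0})
         \<longlonglongrightarrow> 1"
proof -
  have Pprob: "prob_space (PiM {..<n} (\<lambda>_. D))" for n :: nat by (rule prob_space_PiM) (rule D_prob)
  obtain c K N1 where cp: "c > 0" and Kp: "K \<ge> 0" and N1: "\<forall>n\<ge>N1. n > 0 \<and> (\<forall>v. c * n * (norm v)^2 \<le> qB (X n) n v v)
           \<and> (\<forall>v. norm (gram (X n) n *v v) \<le> K * n * norm v)"
    using gram_bounds[OF gram_lim C_pd] by blast
  have dt: "det (X n) n (lam n) c K" if "n \<ge> N1" for n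
    using N1 that cp Kp lam_nonneg unfolding det_def by auto
  define \<sigma> where "\<sigma> = integral\<^sup>L D (\<lambda>x. x\<^sup>2)"
  have \<sigma>p: "\<sigma> \<ge> 0" unfolding \<sigma>_def by (rule integral_nonneg_AE) auto
  define p where "p = real CARD('p)"
  have pp: "p > 0" by (simp add: p_def)
  define m where "m = Min (insert 1 ((\<lambda>j. \<bar>\<beta> $ j\<bar>) ` {j. \<beta> $ j \<noteq> 0}))"
  have mp: "m > 0" unfolding m_def by (subst Min_gr_iff) auto
  have mb: "\<forall>j. \<beta> $ j \<noteq> 0 \<longrightarrow> m \<le> \<bar>\<beta> $ j\<bar>" unfolding m_def by (auto intro: Min_le)
  show ?thesis
  proof (rule LIMSEQ_I)
    fix r :: real assume r: "r > 0"
    define M where "M = \<sigma> * p * K / r + 1"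
    have spK: "\<sigma> * p * K \<ge> 0" using \<sigma>p pp Kp by simp
    have Mp: "M \<ge> 1" using spK r by (simp add: M_def)
    have Mb: "\<sigma> * p * K / M^2 < r"
    proof -
      have "M \<le> M^2" using Mp by (simp add: power2_eq_square)
      then have "\<sigma> * p * K / M^2 \<le> \<sigma> * p * K / M" using spK Mp by (intro divide_left_mono) auto
      also have "\<dots> < r" using Mp spK r by (simp add: divide_less_eq M_def field_simps)
      finally show ?thesis .
    qed
    obtain N2 where N2: "\<forall>n\<ge>N2. n > 0 \<and> sqrt n > 4 * M / (c * m) \<and> lam_star (lam n) \<le> m^2 * c * n / (8 * p)
     \<and> (\<forall>j. lam n j > 2 * M * (M + 3 * K * M / c) / c
           \<and> sqrt n * lam n j \<ge> 12 * K * p * M / (m * c^2) * lam_star (lam n))"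
      using eventually_conds[OF lam_nonneg lamstar_lim lam_inf lam_ratio cp _ mp Kp pp, of M] Mp
      unfolding eventually_sequentially by auto
    show "\<exists>no. \<forall>n\<ge>no. norm (measure (PiM {..<n} (\<lambda>_. D))
            {e \<in> space (PiM {..<n} (\<lambda>_. D)).
               \<forall>j. (adaptive_lasso (X n) n (lam n) (resp (X n) \<beta> e) $ j \<noteq> 0) \<longleftrightarrow> \<beta> $ j \<noteq> 0} - 1) < r"
    proof (intro exI[of _ "max (max N1 N2) CARD('p)"] allI impI)
      fix n assume n: "max (max N1 N2) CARD('p) \<le> n"
      define Pn where "Pn = PiM {..<n} (\<lambda>_. D)"
      define E where "E = {e \<in> space Pn. \<forall>j. (adaptive_lasso (X n) n (lam n) (resp (X n) \<beta> e) $ j \<noteq> 0) \<longleftrightarrow> \<beta> $ j \<noteq> 0}"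
      define Z where "Z = {e \<in> space Pn. M^2 * n \<le> (norm (\<Sum>i<n. e i *\<^sub>R X n i))\<^sup>2}"
      define Bad where "Bad = {e \<in> space Pn. \<not> (\<forall>j. lsq (X n) n (resp (X n) \<beta> e) $ j \<noteq> 0)}"
      interpret Pn: prob_space Pn unfolding Pn_def by (rule Pprob)
      have nN1: "n \<ge> N1" and nN2: "n \<ge> N2" and nC: "n \<ge> CARD('p)" using n by auto
      have cn: "n > 0" and sn: "sqrt n > 4 * M / (c * m)" and Ln: "lam_star (lam n) \<le> m^2 * c * n / (8 * p)"
        and lj: "\<And>j. lam n j > 2 * M * (M + 3 * K * M / c) / c"
        and lr: "\<And>j. sqrt n * lam n j \<ge> 12 * K * p * M / (m * c^2) * lam_star (lam n)"
        using N2 nN2 by auto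
      have Lp: "lam_star (lam n) \<ge> 0" using lam_star_ge[of "lam n"] lam_nonneg by (meson order_trans)
      have snp: "sqrt (real n) > 0" using cn by simp
      have ss: "sqrt (real n) * sqrt (real n) = real n" by simp
      note cc = conds[OF snp ss cp _ mp Kp pp Lp sn Ln] 
      have Mp0: "M > 0" using Mp by simp
      have Esets: "E \<in> sets Pn" unfolding E_def Pn_def by (rule event_meas[OF D_sets dt[OF nN1]])
      have Zsets: "Z \<in> sets Pn" unfolding Z_def Pn_def using z_meas[OF D_sets, where n=n and x="X n"] by measurable
      have Bsets: "Bad \<in> sets Pn" unfolding Bad_def Pn_def using lsq_meas[OF D_sets, where n=n and x="X n" and \<beta>=\<beta>] by measurable
      have Bad0: "measure Pn Bad = 0"
      proof -
        have "AE e in Pn. \<forall>j. lsq (X n) n (resp (X n) \<beta> e) $ j \<noteq> 0" using LS_nonzero[rule_format, OF nC] unfolding Pn_def .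
        then have "emeasure Pn Bad = 0" using AE_iff_measurable[OF Bsets] by (simp add: Bad_def)
        then show ?thesis by (simp add: measure_def)
      qed
      have Zb: "measure Pn Z \<le> \<sigma> * p * K / M^2"
      proof -
        have "measure Pn Z \<le> \<sigma> * CARD('p) * K * n / (M^2 * n)"
          unfolding Z_def Pn_def \<sigma>_def
          by (rule zsq_markov[OF D_prob D_sets D_int D_mean D_int2]) (use N1 nN1 Mp0 cn in auto)
        also have "\<dots> = \<sigma> * p * K / M^2" using cn by (simp add: p_def)
        finally show ?thesis .
      qed
      have sub: "space Pn - E \<subseteq> Z \<union> Bad"
      proof
        fix e assume e: "e \<in> space Pn - E"
        show "e \<in> Z \<union> Bad"
        proof (rule ccontr)
          assume "e \<notin> Z \<union> Bad"
          then have zl: "(norm (\<Sum>i<n. e i *\<^sub>R X n i))\<^sup>2 < M^2 * n"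
            and lnz: "\<forall>j. lsq (X n) n (resp (X n) \<beta> e) $ j \<noteq> 0" using e by (auto simp: Z_def Bad_def)
          interpret det "X n" n "lam n" \<beta> e c K using dt[OF nN1] by (simp add: det_def)
          have zb: "norm zz \<le> M * sqrt n"
          proof -
            have e1: "norm zz = norm (\<Sum>i<n. e i *\<^sub>R X n i)" by (simp only: zz_def)
            have e2: "(M * sqrt n)\<^sup>2 = M^2 * n" by (simp add: power_mult_distrib)
            have "(norm zz)\<^sup>2 < (M * sqrt n)\<^sup>2" unfolding e1 e2 by (rule zl)
            moreover have "0 \<le> M * sqrt n" using Mp0 by simp
            ultimately show ?thesis by (rule less_imp_le[OF power2_less_imp_less])
          qed
          have "\<forall>j. adaptive_lasso (X n) n (lam n) (resp (X n) \<beta> e) $ j \<noteq> 0 \<longleftrightarrow> \<beta> $ j \<noteq> 0"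
          proof (rule pattern[OF _ Mp0 zb lnz mp mb])
            show "\<forall>b'. obj (adaptive_lasso (X n) n (lam n) (resp (X n) \<beta> e)) \<le> obj b'"
              using al_min[OF dt[OF nN1]] by (simp add: obj_def)
            show "\<forall>j. lam n j \<le> lam_star (lam n)" by (simp add: lam_star_ge)
            show "M / (c * sqrt n) \<le> m / 2" using cc(1) Mp0 by simp
            show "2 * (M * sqrt n + CARD('p) * (2 * lam_star (lam n) / m)) / (c * n) < m"
              using cc(2) Mp0 by (simp add: p_def)
            show "\<forall>j. \<beta> $ j = 0 \<longrightarrow> lam n j * (c * sqrt n) / M >
               M * sqrt n + 3/2 * K * n * (2 * (M * sqrt n + CARD('p) * (2 * lam_star (lam n) / m)) / (c * n))"
              using cc(3)[OF Mp0 lj lr] by (simp add: p_def)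
          qed
          then show False using e by (simp add: E_def)
        qed
      qed
      have "measure Pn (space Pn - E) \<le> measure Pn (Z \<union> Bad)"
        using sub Zsets Bsets by (intro Pn.finite_measure_mono) auto
      also have "\<dots> \<le> measure Pn Z + measure Pn Bad" using Zsets Bsets by (rule measure_Un_le)
      finally have "1 - measure Pn E \<le> \<sigma> * p * K / M^2"
        using Pn.prob_compl[OF Esets] Zb Bad0 by simp
      moreover have "measure Pn E \<le> 1" by (rule Pn.prob_le_1)
      ultimately have "norm (measure Pn E - 1) < r" using Mb by simp
      then show "norm (measure (PiM {..<n} (\<lambda>_. D))
            {e \<in> space (PiM {..<n} (\<lambda>_. D)).
               \<forall>j. (adaptive_lasso (X n) n (lam n) (resp (X n) \<beta> e) $ j \<noteq> 0) \<longleftrightarrow> \<beta> $ j \<noteq> 0} - 1) < r"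
        by (simp add: Pn_def E_def)
    qed
  qed
qed


end
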